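(* Let $0<\alpha<1$, $\sigma>0$, $N_1$ a positive integer, $h=\sigma^2\alpha^2$, $T=\sqrt{N_1h}=\sigma\alpha\sqrt{N_1}$, $\kappa=\frac{\alpha}{1-\alpha}$, and $N_t=\mathrm{ceil}\big((\kappa+1)^2T^2/h+1\big)$. For $x\in[0,1]$ and $u>0$ let $$f(u,x)=\frac{\sin(\alpha\pi)}{\alpha\pi}\frac{1}{2\sqrt u}\frac{xe^{\sqrt u-T}}{e^{\frac1\alpha(\sqrt u-T)}+x},\quad I(x)=\int_0^{N_th}f(u,x)\,\mathrm{d}u,\quad S(x)=h\sum_{j=1}^{N_t}f(jh,x).$$ Let $$u^*=\frac{1+(1-2\alpha)\sqrt{4\alpha-4\alpha^2+1}}{2(1-\alpha)^2},\qquad x^*=\frac{\frac1\kappa\sqrt{u^*}+1}{\sqrt{u^*}-1}\,e^{\frac1\alpha(\sqrt{u^*}-T)}.$$ Then uniformly for $x\in[0,x^*]$, $$0\le I(x)-S(x)\le I(x)\le\left(\frac{\frac1\kappa\sqrt{u^*}+1}{\sqrt{u^*}-1}\right)^{\alpha}e^{\sqrt{u^*}-T}.$$ Additionally, $u^*$ is monotonically increasing in $\alpha\in(0,1)$ with $u^*\in(1,4)$, and $\left(\frac{\frac1\kappa\sqrt{u^*}+1}{\sqrt{u^*}-1}\right)^{\alpha}e^{\sqrt{u^*}}$ is uniformly bounded for $\alpha\in(0,1)$.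
   Context: $\mathrm{ceil}(y)$ denotes the least integer $\ge y$. *)

theory Defs
  imports "HOL-Analysis.Analysis"
begin

definition kappa :: "real \<Rightarrow> real" where
  "kappa \<alpha> = \<alpha> / (1 - \<alpha>)"

definition ustar :: "real \<Rightarrow> real" where
  "ustar \<alpha> = (1 + (1 - 2*\<alpha>) * sqrt (4*\<alpha> - 4*\<alpha>^2 + 1)) / (2 * (1 - \<alpha>)^2)"

definition ratio_star :: "real \<Rightarrow> real" where
  "ratio_star \<alpha> = (sqrt (ustar \<alpha>) / kappa \<alpha> + 1) / (sqrt (ustar \<alpha>) - 1)"

definition xstar :: "real \<Rightarrow> real \<Rightarrow> real" where
  "xstar \<alpha> T = ratio_star \<alpha> * exp ((sqrt (ustar \<alpha>) - T) / \<alpha>)"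

definition fint :: "real \<Rightarrow> real \<Rightarrow> real \<Rightarrow> real \<Rightarrow> real" where
  "fint \<alpha> T u x = sin (\<alpha> * pi) / (\<alpha> * pi) * (1 / (2 * sqrt u)) *
      (x * exp (sqrt u - T) / (exp ((sqrt u - T) / \<alpha>) + x))"

end

theory Submission
  imports Defs
begin


lemma sstar_props:
  fixes a :: real
  assumes a: "0 < a" "a < 1"
  shows "1 < sqrt (ustar a)" "sqrt (ustar a) < 2"
    "(1-a) * (sqrt (ustar a))^2 + (2*a-1) * sqrt (ustar a) - 2*a = 0"
    "ustar a = (sqrt (ustar a))^2"
proof -
  define s where "s = sqrt (ustar a)"
  define R where "R = sqrt (4*a - 4*a^2 + 1)"
  have aa: "0 < a*(1-a)" using a by simp
  have pos: "0 \<le> 4*a - 4*a^2 + 1" using aa by (simp add: power2_eq_square algebra_simps)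
  have R2: "R^2 = 4*a - 4*a^2 + 1" unfolding R_def by (rule real_sqrt_pow2[OF pos])
  have R0: "R \<ge> 0" unfolding R_def using pos by simp
  have R1: "R > 1"
  proof -
    have "1 < 4*a - 4*a^2 + 1" using aa by (simp add: power2_eq_square algebra_simps)
    thus ?thesis unfolding R_def by (simp add: real_less_rsqrt)
  qed
  have R3: "R < 3 - 2*a"
  proof -
    have "0 < (1-a)*(1-a)" using a by simp
    hence "R^2 < (3-2*a)^2" using R2 by (simp add: power2_eq_square algebra_simps)
    thus ?thesis using a R0 by (smt (verit) power_mono)
  qed
  define t where "t = ((1 - 2*a) + R) / (2*(1-a))"
  have t1: "1 < t" unfolding t_def using a R1 by (simp add: field_simps)
  have t2: "t < 2" unfolding t_def using a R3 by (simp add: field_simps)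
  have d0: "1 - a \<noteq> 0" using a by simp
  have num: "((1 - 2*a) + R)^2 = 2 * (1 + (1 - 2*a) * R)" using R2 by (simp add: power2_eq_square algebra_simps)
  have ut: "ustar a = t^2"
  proof -
    have e: "(2 * (1 - a))^2 = 2 * (2 * (1-a)^2)" by (simp add: power2_eq_square algebra_simps)
    show ?thesis unfolding ustar_def t_def R_def[symmetric] power_divide num e
      by (simp only: mult_divide_mult_cancel_left_if) simp
  qed
  have st: "s = t" unfolding s_def ut using t1 by simp
  show "1 < sqrt (ustar a)" "sqrt (ustar a) < 2" "ustar a = (sqrt (ustar a))^2" using t1 t2 st ut s_def by auto
  have tD: "2*(1-a)*t = 1-2*a+R" unfolding t_def using d0 by simp
  have t2D: "2*(1-a)^2 * t^2 = 1+(1-2*a)*R" using ut d0 unfolding ustar_def R_def[symmetric] by (simp add: field_simps)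
  have "2*(1-a)*((1-a) * t^2 + (2*a-1) * t - 2*a) = (2*(1-a)^2*t^2) + (2*a-1)*(2*(1-a)*t) - 4*a*(1-a)"
    by (simp add: algebra_simps power2_eq_square)
  also have "\<dots> = (1+(1-2*a)*R) + (2*a-1)*(1-2*a+R) - 4*a*(1-a)" by (simp only: tD t2D)
  also have "\<dots> = 0" by (simp add: algebra_simps power2_eq_square)
  finally have "(1-a) * t^2 + (2*a-1) * t - 2*a = 0" using d0 by simp
  thus "(1-a) * (sqrt (ustar a))^2 + (2*a-1) * sqrt (ustar a) - 2*a = 0"
    unfolding s_def[symmetric] st .
qed

lemma a_rel:
  fixes a s :: real
  assumes "(1-a) * s^2 + (2*a-1) * s - 2*a = 0"
  shows "a * ((s-1)^2 + 1) = s * (s - 1)"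
  using assms by (simp add: algebra_simps power2_eq_square)

lemma ustar_mono:
  fixes a b :: real
  assumes "0 < a" "a \<le> b" "b < 1"
  shows "ustar a \<le> ustar b"
proof -
  define sa where "sa = sqrt (ustar a)"
  define sb where "sb = sqrt (ustar b)"
  have sa: "1 < sa" "sa < 2" "a * ((sa-1)^2 + 1) = sa * (sa - 1)"
    using sstar_props[of a] a_rel[of a sa] assms unfolding sa_def by auto
  have sb: "1 < sb" "sb < 2" "b * ((sb-1)^2 + 1) = sb * (sb - 1)"
    using sstar_props[of b] a_rel[of b sb] assms unfolding sb_def by auto
  have "sa \<le> sb"
  proof (rule ccontr)
    assume "\<not> sa \<le> sb"
    hence lt: "sb < sa" by simp
    define ya where "ya = sa - 1"
    define yb where "yb = sb - 1"
    have y: "0 < ya" "ya < 1" "0 < yb" "yb < 1" "yb < ya" using sa sb lt unfolding ya_def yb_def by auto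
    have "ya*yb < 1" using y by (smt (verit) mult_strict_mono mult_less_cancel_left1)
    hence p: "0 < (ya-yb)*(ya+yb+1-ya*yb)" using y by simp
    have fac: "(sa*(sa-1))*((sb-1)^2+1) - (sb*(sb-1))*((sa-1)^2+1) = (ya-yb)*(ya+yb+1-ya*yb)"
      unfolding ya_def yb_def by (simp add: algebra_simps power2_eq_square)
    have Da: "0 < (sa-1)^2+1" "0 < (sb-1)^2+1" by (auto intro: add_nonneg_pos)
    have "b * (((sa-1)^2+1)*((sb-1)^2+1)) \<ge> a * (((sa-1)^2+1)*((sb-1)^2+1))"
      using assms Da by (intro mult_right_mono) auto
    also have "a * (((sa-1)^2+1)*((sb-1)^2+1)) = (sa*(sa-1))*((sb-1)^2+1)"
      using sa(3) by (simp add: mult.assoc[symmetric])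
    also have "b * (((sa-1)^2+1)*((sb-1)^2+1)) = (sb*(sb-1))*((sa-1)^2+1)"
      using sb(3) by (metis mult.assoc mult.commute)
    finally show False using fac p by linarith
  qed
  hence "sa^2 \<le> sb^2" using sa by (intro power_mono) auto
  thus ?thesis using sstar_props[of a] sstar_props[of b] assms unfolding sa_def sb_def by auto
qed

lemma ratio_bound:
  fixes a :: real
  assumes a: "0 < a" "a < 1"
  shows "0 < ratio_star a" "ratio_star a powr a * exp (sqrt (ustar a)) \<le> 6 * exp 2 * exp 2"
proof -
  define s where "s = sqrt (ustar a)"
  have s: "1 < s" "s < 2" "(1-a) * s^2 + (2*a-1) * s - 2*a = 0"
    using sstar_props[OF a] unfolding s_def by auto
  have rel: "(s-1)*((1-a) * s + a) = a" using s(3) by (simp add: algebra_simps power2_eq_square)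
  have k: "kappa a = a/(1-a)" by (simp add: kappa_def)
  have num: "s / kappa a + 1 = (s*(1-a) + a)/a" using a by (simp add: k field_simps)
  have num0: "0 < (s*(1-a) + a)/a" using a s by (intro divide_pos_pos add_pos_pos mult_pos_pos) auto
  have numb: "(s*(1-a) + a)/a \<le> 3/a"
  proof -
    have "s*(1-a) \<le> s" using a s by (intro mult_left_le) auto
    hence "s*(1-a) \<le> 2" using s by linarith
    thus ?thesis using a by (simp add: divide_right_mono)
  qed
  have "(1-a) * s \<le> (1-a) * 2" using a s by (intro mult_left_mono) auto
  hence d1: "(1-a) * s + a \<le> 2" using a by (simp add: algebra_simps)
  have "0 < (1-a) * s" using a s by simp
  hence d: "(1-a) * s + a \<le> 2" "0 < (1-a) * s + a" using d1 a by auto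
  have sm1: "a/2 \<le> s - 1"
  proof -
    have "s - 1 = a / ((1-a) * s + a)" using rel d by (simp add: field_simps)
    also have "\<dots> \<ge> a/2" using d a by (intro divide_left_mono) auto
    finally show ?thesis by simp
  qed
  have r: "ratio_star a = ((s*(1-a) + a)/a) / (s - 1)" unfolding ratio_star_def s_def[symmetric] num ..
  show rpos: "0 < ratio_star a" unfolding r by (rule divide_pos_pos[OF num0]) (use s in simp)
  have rb: "ratio_star a \<le> 6 / a^2"
  proof -
    have "ratio_star a \<le> (3/a) / (a/2)" unfolding r
      by (rule frac_le[OF _ numb _ sm1]) (use a in auto)
    thus ?thesis by (simp add: power2_eq_square)
  qed
  have "ratio_star a powr a \<le> (6/a^2) powr a" using rb rpos a by (intro powr_mono2) auto
  also have "(6/a^2) powr a = exp (a * ln 6 - 2 * (a * ln a))"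
    using a by (simp add: powr_def ln_div ln_mult algebra_simps ln_realpow)
  also have "\<dots> \<le> exp (ln 6 + 2)"
  proof -
    have "a * ln 6 \<le> ln 6" using a by (simp add: mult_left_le_one_le)
    moreover have "- (a * ln a) \<le> 1"
    proof -
      have "ln (1/a) \<le> 1/a - 1" using a by (intro ln_le_minus_one) auto
      hence "- ln a \<le> 1/a - 1" using a by (simp add: ln_div)
      hence "a * (- ln a) \<le> a * (1/a - 1)" using a by (intro mult_left_mono) auto
      thus ?thesis using a by (simp add: algebra_simps)
    qed
    ultimately have "a * ln 6 - 2 * (a * ln a) \<le> ln 6 + 2" by linarith
    thus ?thesis by simp
  qed
  also have "\<dots> = 6 * exp 2" by (simp add: exp_add)
  finally have A: "ratio_star a powr a \<le> 6 * exp 2" .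
  have B: "exp s \<le> exp 2" using s by simp
  show "ratio_star a powr a * exp (sqrt (ustar a)) \<le> 6 * exp 2 * exp 2"
    unfolding s_def[symmetric] using A B by (intro mult_mono) auto
qed

lemma key_ineq:
  fixes a T s x :: real
  assumes a: "0 < a" "a < 1" and s1: "1 \<le> s" and x: "0 \<le> x" "x \<le> xstar a T"
  shows "x * ((s-1)*a) \<le> exp ((s-T)/a) * (s*(1-a)+a)"
proof -
  define S where "S = sqrt (ustar a)"
  have S: "1 < S" "(1-a) * S^2 + (2*a-1) * S - 2*a = 0"
    using sstar_props[OF a] unfolding S_def by auto
  define E0 where "E0 = exp ((S-T)/a)"
  have E0: "0 < E0" unfolding E0_def by simp
  have r: "ratio_star a = (S*(1-a)+a)/(a*(S-1))"
    using a S unfolding ratio_star_def S_def[symmetric] kappa_def by (simp add: field_simps)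
  have D: "(S-1)*(s*(1-a)+a)*(a+s-S) - a*(S*(1-a)+a)*(s-1) = (1-a)*(S-1)*(s-S)^2 + (s-S)*((1-a) * S^2 + (2*a-1) * S - 2*a)"
    by (simp add: algebra_simps power2_eq_square)
  have "0 \<le> (1-a)*(S-1)*(s-S)^2" using a S by simp
  hence P: "a*(S*(1-a)+a)*(s-1) \<le> (S-1)*(s*(1-a)+a)*(a+s-S)" using D S(2) by simp
  have sp: "0 \<le> s*(1-a)+a" using a s1 by simp
  have "x * ((s-1)*a) \<le> xstar a T * ((s-1)*a)" using x s1 a by (intro mult_right_mono) auto
  also have "xstar a T * ((s-1)*a) = E0 * ((S*(1-a)+a)*(s-1)/(S-1))"
    unfolding xstar_def r S_def[symmetric] E0_def using a S by (simp add: field_simps)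
  also have "(S*(1-a)+a)*(s-1)/(S-1) \<le> (1 + (s-S)/a) * (s*(1-a)+a)"
  proof -
    have "(S*(1-a)+a)*(s-1)/(S-1) = (a*(S*(1-a)+a)*(s-1)) / (a*(S-1))" using a by simp
    also have "\<dots> \<le> ((S-1)*(s*(1-a)+a)*(a+s-S)) / (a*(S-1))"
      using P a S by (intro divide_right_mono) auto
    also have "\<dots> = (1 + (s-S)/a) * (s*(1-a)+a)" using a S by (simp add: field_simps)
    finally show ?thesis .
  qed
  hence "E0 * ((S*(1-a)+a)*(s-1)/(S-1)) \<le> E0 * ((1 + (s-S)/a) * (s*(1-a)+a))"
    using E0 by (intro mult_left_mono) auto
  also have "\<dots> \<le> E0 * (exp ((s-S)/a) * (s*(1-a)+a))"
    using E0 sp by (intro mult_left_mono mult_right_mono) auto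
  also have "\<dots> = exp ((s-T)/a) * (s*(1-a)+a)"
  proof -
    have "(S - T) / a + (s - S) / a = (s - T) / a" by (simp add: add_divide_distrib[symmetric])
    thus ?thesis unfolding E0_def by (simp add: mult.assoc[symmetric] exp_add[symmetric])
  qed
  finally show ?thesis .
qed

lemma psi_mono:
  fixes a T s r x :: real
  assumes a: "0 < a" "a < 1" and sr: "0 < s" "s \<le> r" and x: "0 \<le> x" "x \<le> xstar a T"
  shows "s * (exp ((s-T)/a) + x) * exp (-s) \<le> r * (exp ((r-T)/a) + x) * exp (-r)"
proof (rule DERIV_nonneg_imp_nondecreasing[OF sr(2)])
  fix w assume w: "s \<le> w" "w \<le> r"
  let ?E = "exp ((w-T)/a)"
  let ?d = "(?E + x) * exp (-w) + w * (?E / a + 0) * exp (-w) + w * (?E + x) * (exp (-w) * (-1))"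
  have "((\<lambda>w. w * (exp ((w-T)/a) + x) * exp (-w)) has_real_derivative ?d) (at w)"
    using a by (auto intro!: derivative_eq_intros simp: field_simps)
  moreover have "?d \<ge> 0"
  proof -
    have eq: "?d = exp (-w) * ((?E + x)*(1-w) + w*?E/a)" by (simp add: algebra_simps)
    have "(?E + x)*(1-w) + w*?E/a \<ge> 0"
    proof (cases "w \<le> 1")
      case True
      thus ?thesis using x a sr w by (intro add_nonneg_nonneg mult_nonneg_nonneg divide_nonneg_pos) auto
    next
      case False
      have k: "x * ((w-1)*a) \<le> ?E * (w*(1-a)+a)" using key_ineq[OF a _ x] False by simp
      have "(?E + x)*(1-w) + w*?E/a = (?E * (w*(1-a)+a) - x * ((w-1)*a)) / a"
        using a by (simp add: field_simps)
      thus ?thesis using k a by simp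
    qed
    thus ?thesis unfolding eq by simp
  qed
  ultimately show "\<exists>y. ((\<lambda>w. w * (exp ((w-T)/a) + x) * exp (-w)) has_real_derivative y) (at w) \<and> 0 \<le> y" by blast
qed

lemma fint_mono:
  fixes a T u v x :: real
  assumes a: "0 < a" "a < 1" and uv: "0 < u" "u \<le> v" and x: "0 \<le> x" "x \<le> xstar a T"
  shows "fint a T v x \<le> fint a T u x"
proof -
  define \<psi> where "\<psi> s = s * (exp ((s-T)/a) + x) * exp (-s)" for s
  have fe: "fint a T w x = sin (a*pi)/(a*pi) * (x * exp (-T)) / (2 * \<psi> (sqrt w))" if "0 < w" for w
  proof -
    have "exp ((sqrt w - T)/a) + x > 0" using x by (simp add: add_pos_nonneg)
    thus ?thesis using that x unfolding fint_def \<psi>_def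
      by (simp add: exp_diff exp_minus field_simps)
  qed
  have pos: "0 < \<psi> (sqrt u)" unfolding \<psi>_def using uv x by (simp add: add_pos_nonneg)
  have le: "\<psi> (sqrt u) \<le> \<psi> (sqrt v)" unfolding \<psi>_def
    using uv x by (intro psi_mono[OF a _ _ x]) auto
  have c: "0 \<le> sin (a*pi)/(a*pi) * (x * exp (-T))"
  proof -
    have "0 < sin (a*pi)" using a by (intro sin_gt_zero) auto
    thus ?thesis using a x by simp
  qed
  have v0: "0 < v" using uv by simp
  show ?thesis unfolding fe[OF uv(1)] fe[OF v0] using c pos le
    by (intro divide_left_mono mult_pos_pos) auto
qed

lemma Gamma_refl_real:
  fixes a :: real
  assumes "0 < a" "a < 1"
  shows "Gamma a * Gamma (1-a) = pi / sin (pi*a)"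
proof -
  have "Gamma (complex_of_real a) * Gamma (1 - complex_of_real a) = of_real pi / sin (of_real pi * complex_of_real a)"
    by (rule Gamma_reflection_complex)
  also have "1 - complex_of_real a = complex_of_real (1-a)" by simp
  also have "sin (of_real pi * complex_of_real a) = complex_of_real (sin (pi*a))"
    by (simp flip: of_real_mult add: sin_of_real)
  finally have "complex_of_real (Gamma a * Gamma (1-a)) = complex_of_real (pi / sin (pi*a))"
    by (simp only: Gamma_complex_of_real sin_of_real of_real_mult of_real_divide)
  thus ?thesis by (simp only: of_real_eq_iff)
qed

lemma val_eq:
  fixes a x s T :: real
  assumes a: "0 < a" "a < 1" and x: "0 < x"
  defines "z \<equiv> x * exp (-((s-T)/a))"
  defines "tt \<equiv> 1 / (1 + z)"
  shows "x powr a * (tt powr (a-1) * (1-tt) powr ((1-a)-1)) * (z/(a*(1+z)^2))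
         = (1/a) * (x*exp(s-T)/(exp ((s-T)/a) + x))"
proof -
  define y where "y = (s-T)/a"
  have z0: "0 < z" unfolding z_def using x by simp
  have tt0: "0 < tt" unfolding tt_def using z0 by simp
  have omt: "1 - tt = z/(1+z)" unfolding tt_def using z0 by (simp add: field_simps)
  have omt0: "0 < 1 - tt" unfolding omt using z0 by simp
  have lz: "ln z = ln x - y" unfolding z_def y_def using x by (simp add: ln_mult)
  have ltt: "ln tt = - ln (1+z)" unfolding tt_def using z0 by (simp add: ln_div)
  have lomt: "ln (1-tt) = ln z - ln (1+z)" unfolding omt using z0 by (simp add: ln_div)
  have "x powr a * (tt powr (a-1) * (1-tt) powr ((1-a)-1))
      = exp (a * ln x + (a-1) * ln tt + ((1-a)-1) * ln (1-tt))"
    using x tt0 omt0 by (simp add: powr_def exp_add exp_diff exp_minus field_simps)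
  also have "a * ln x + (a-1) * ln tt + ((1-a)-1) * ln (1-tt) = ln (1+z) + a*y"
    unfolding ltt lomt lz by (simp add: algebra_simps)
  also have "exp (ln (1+z) + a*y) = (1+z) * exp (s-T)"
    using z0 a unfolding y_def by (simp add: exp_add)
  finally have A: "x powr a * (tt powr (a-1) * (1-tt) powr ((1-a)-1)) = (1+z) * exp (s-T)" .
  have B: "z/(1+z) = x / (exp y + x)"
  proof -
    have "0 < exp y + x" using x by (simp add: add_pos_pos)
    thus ?thesis unfolding z_def y_def[symmetric] using x
      by (simp add: exp_minus field_simps)
  qed
  have "(1+z) * exp (s-T) * (z/(a*(1+z)^2)) = (1/a) * exp (s-T) * (z/(1+z))"
  proof -
    have nz: "1 + z \<noteq> 0" "a \<noteq> 0" using z0 a by auto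
    have "(1+z) * exp (s-T) * (z/(a*(1+z)^2)) = (exp (s-T) * z * (1+z)) / ((a * (1+z)) * (1+z))"
      by (simp add: power2_eq_square mult_ac)
    also have "\<dots> = (exp (s-T) * z) / (a * (1+z))" using nz by simp
    finally show ?thesis by simp
  qed
  also have "\<dots> = (1/a) * (x*exp(s-T)/(exp ((s-T)/a) + x))"
    unfolding B y_def by simp
  finally show ?thesis unfolding A .
qed

lemma fint_integral:
  fixes a T x b :: real
  assumes a: "0 < a" "a < 1" and x: "0 < x" and b: "0 \<le> b"
  shows "\<exists>J. ((\<lambda>u. fint a T u x) has_integral J) {0..b} \<and> J \<le> x powr a"
proof -
  define p where "p t = t powr (a-1) * (1-t) powr ((1-a)-1)" for t :: real
  have pint: "(p has_integral Beta a (1-a)) {0..1}"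
    unfolding p_def using has_integral_Beta_real[of a "1-a"] a by simp
  hence pI: "p integrable_on {0..1}" by blast
  have p0: "0 \<le> p t" for t unfolding p_def by simp
  define H where "H t = integral {0..t} p" for t
  have Hder: "(H has_real_derivative p t) (at t)" if t: "0 < t" "t < 1" for t
  proof -
    have "continuous (at t) p" unfolding p_def using t
      by (intro continuous_intros) auto
    hence c: "continuous (at t within ({0..1} - {})) p" by (rule continuous_at_imp_continuous_within)
    have "(H has_vector_derivative p t) (at t within ({0..1} - {}))"
      unfolding H_def using t by (intro integral_has_vector_derivative_continuous_at[OF pI _ _ c]) auto
    hence "(H has_vector_derivative p t) (at t)" using t by (simp add: at_within_Icc_at)
    thus ?thesis by (simp add: has_real_derivative_iff_has_vector_derivative)
  qed
  have Hb: "0 \<le> H t" "H t \<le> Beta a (1-a)" if t: "0 \<le> t" "t \<le> 1" for t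
  proof -
    have i1: "p integrable_on {0..t}" using t by (intro integrable_subinterval_real[OF pI]) auto
    have i2: "p integrable_on {t..1}" using t by (intro integrable_subinterval_real[OF pI]) auto
    show "0 \<le> H t" unfolding H_def using i1 p0 by (intro integral_nonneg) auto
    have "0 \<le> integral {t..1} p" using i2 p0 by (intro integral_nonneg) auto
    moreover have "H t + integral {t..1} p = integral {0..1} p"
      unfolding H_def by (rule Henstock_Kurzweil_Integration.integral_combine[OF t pI])
    moreover have "integral {0..1} p = Beta a (1-a)" using pint by (rule integral_unique)
    ultimately show "H t \<le> Beta a (1-a)" by linarith
  qed
  define z where "z s = x * exp (-((s-T)/a))" for s
  define tt where "tt s = 1 / (1 + z s)" for s
  have z0: "0 < z s" for s unfolding z_def using x by simp
  have tt01: "0 < tt s" "tt s < 1" for s unfolding tt_def using z0[of s] by auto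
  have ttder: "(tt has_real_derivative (z s/(a*(1+z s)^2))) (at s)" for s
  proof -
    have "(z has_real_derivative (- z s / a)) (at s)" unfolding z_def
      using a by (auto intro!: derivative_eq_intros simp: field_simps)
    hence "((\<lambda>s. 1 / (1 + z s)) has_real_derivative (- (- z s / a) / (1 + z s)^2)) (at s)"
      using z0[of s] by (auto intro!: derivative_eq_intros simp: field_simps power2_eq_square)
    thus ?thesis unfolding tt_def by (simp add: field_simps)
  qed
  define c0 where "c0 = sin (a*pi) / pi"
  define g where "g s = sin (a*pi)/(a*pi) * (x*exp(s-T)/(exp ((s-T)/a) + x))" for s
  define K where "K s = c0 * x powr a * H (tt s)" for s
  have Kder: "(K has_real_derivative g s) (at s)" for s
  proof -
    have "((\<lambda>s. H (tt s)) has_real_derivative p (tt s) * (z s/(a*(1+z s)^2))) (at s)"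
      by (rule DERIV_chain2[OF Hder ttder]) (use tt01 in auto)
    hence "(K has_real_derivative c0 * x powr a * (p (tt s) * (z s/(a*(1+z s)^2)))) (at s)"
      unfolding K_def by (rule DERIV_cmult)
    also have "c0 * x powr a * (p (tt s) * (z s/(a*(1+z s)^2))) = c0 * (x powr a * p (tt s) * (z s/(a*(1+z s)^2)))"
      by (simp add: mult_ac)
    also have "x powr a * p (tt s) * (z s/(a*(1+z s)^2)) = (1/a) * (x*exp(s-T)/(exp ((s-T)/a) + x))"
      unfolding p_def tt_def z_def by (rule val_eq[OF a x])
    also have "c0 * ((1/a) * (x*exp(s-T)/(exp ((s-T)/a) + x))) = g s"
      unfolding c0_def g_def by simp
    finally show ?thesis .
  qed
  have Kc: "isCont K s" for s using Kder by (rule DERIV_isCont)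
  define F where "F u = K (sqrt u)" for u
  have Fc: "continuous_on {0..b} F" unfolding F_def
    by (intro continuous_at_imp_continuous_on ballI continuous_at_compose[of _ sqrt K, unfolded o_def] Kc isCont_real_sqrt)
  have Fder: "(F has_vector_derivative fint a T u x) (at u)" if u: "u \<in> {0<..<b}" for u
  proof -
    have up: "0 < u" using u by simp
    have "(F has_real_derivative g (sqrt u) * (inverse (sqrt u) / 2)) (at u)"
      unfolding F_def by (rule DERIV_chain2[OF Kder DERIV_real_sqrt[OF up]])
    also have "g (sqrt u) * (inverse (sqrt u) / 2) = fint a T u x"
      unfolding g_def fint_def by (simp add: field_simps)
    finally show ?thesis by (simp add: has_real_derivative_iff_has_vector_derivative)
  qed
  have HI: "((\<lambda>u. fint a T u x) has_integral (F b - F 0)) {0..b}"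
    by (rule fundamental_theorem_of_calculus_interior[OF b Fc Fder])
  have "F b - F 0 = c0 * x powr a * (H (tt (sqrt b)) - H (tt (sqrt 0)))"
    unfolding F_def K_def by (simp add: algebra_simps)
  also have "\<dots> \<le> c0 * x powr a * Beta a (1-a)"
  proof -
    have sp: "0 < sin (a*pi)" using a by (intro sin_gt_zero) auto
    have "0 \<le> c0 * x powr a" unfolding c0_def using sp by simp
    moreover have "H (tt (sqrt b)) - H (tt (sqrt 0)) \<le> Beta a (1-a)"
      using Hb[of "tt (sqrt b)"] Hb[of "tt (sqrt 0)"] tt01[of "sqrt b"] tt01[of "sqrt 0"] by force
    ultimately show ?thesis by (intro mult_left_mono) auto
  qed
  also have "c0 * x powr a * Beta a (1-a) = x powr a"
  proof -
    have sp: "0 < sin (a*pi)" using a by (intro sin_gt_zero) auto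
    have "Beta a (1-a) = pi / sin (pi*a)" unfolding Beta_def using Gamma_refl_real[OF a] by simp
    thus ?thesis unfolding c0_def using sp by (simp add: mult.commute)
  qed
  finally show ?thesis using HI by blast
qed

lemma sum_le_integral:
  fixes f :: "real \<Rightarrow> real" and h :: real
  assumes h: "0 < h" and fi: "f integrable_on {0..real N * h}"
    and mono: "\<And>u v. 0 < u \<Longrightarrow> u \<le> v \<Longrightarrow> f v \<le> f u"
  shows "h * (\<Sum>j=1..N. f (real j * h)) \<le> integral {0..real N * h} f"
  using fi
proof (induction N)
  case 0
  then show ?case by simp
next
  case (Suc n)
  define A where "A = real n * h"
  define B where "B = real (Suc n) * h"
  have AB: "0 \<le> A" "A \<le> B" "B - A = h" unfolding A_def B_def using h by (auto simp: algebra_simps)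
  have fiB: "f integrable_on {0..B}" using Suc.prems unfolding B_def .
  have fiA: "f integrable_on {0..A}" using AB by (intro integrable_subinterval_real[OF fiB]) auto
  have fiAB: "f integrable_on {A..B}" using AB by (intro integrable_subinterval_real[OF fiB]) auto
  have IH: "h * (\<Sum>j=1..n. f (real j * h)) \<le> integral {0..A} f" using Suc.IH fiA unfolding A_def by blast
  define f2 where "f2 u = (if u = A then f B else f u)" for u
  have neg: "negligible {A}" by simp
  have eq: "integral {A..B} f = integral {A..B} f2"
    by (rule integral_spike[OF neg]) (auto simp: f2_def)
  have f2i: "f2 integrable_on {A..B}"
    by (rule integrable_spike[OF fiAB neg]) (auto simp: f2_def)
  have "integral {A..B} (\<lambda>u. f B) \<le> integral {A..B} f2"
  proof (rule integral_le)
    show "(\<lambda>u. f B) integrable_on {A..B}" by (rule Henstock_Kurzweil_Integration.integrable_const_ivl)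
    show "f2 integrable_on {A..B}" by (rule f2i)
    show "f B \<le> f2 u" if u: "u \<in> {A..B}" for u
      proof (cases "u = A")
        case True thus ?thesis by (simp add: f2_def)
      next
        case False
        hence "A < u" using u by auto
        hence "0 < u" using AB by linarith
        thus ?thesis using mono[of u B] u False by (simp add: f2_def)
      qed
  qed
  hence step: "h * f B \<le> integral {A..B} f" unfolding eq using AB by simp
  have comb: "integral {0..A} f + integral {A..B} f = integral {0..B} f"
    by (rule Henstock_Kurzweil_Integration.integral_combine[OF AB(1,2) fiB])
  have "h * (\<Sum>j=1..Suc n. f (real j * h)) = h * (\<Sum>j=1..n. f (real j * h)) + h * f B"
    unfolding B_def by (simp add: algebra_simps)
  also have "\<dots> \<le> integral {0..B} f" using IH step comb by linarith
  finally show ?case unfolding B_def .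
qed


lemma fint_nonneg:
  fixes a T u x :: real
  assumes a: "0 < a" "a < 1" and x: "0 \<le> x" and u: "0 \<le> u"
  shows "0 \<le> fint a T u x"
proof -
  have "0 < sin (a*pi)" using a by (intro sin_gt_zero) auto
  moreover have "0 < exp ((sqrt u - T) / a) + x" using x by (simp add: add_pos_nonneg)
  moreover have "0 \<le> 1 / (2 * sqrt u)" using u by simp
  moreover have "0 \<le> x * exp (sqrt u - T) / (exp ((sqrt u - T) / a) + x)"
    using x calculation(2) by (intro divide_nonneg_pos) auto
  ultimately show ?thesis unfolding fint_def using a
    by (intro mult_nonneg_nonneg) auto
qed

theorem theorem3p3:
  fixes \<alpha> \<sigma> :: real and N\<^sub>1 :: nat
  assumes "0 < \<alpha>" "\<alpha> < 1" "0 < \<sigma>" "0 < N\<^sub>1"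
  defines "h \<equiv> \<sigma>^2 * \<alpha>^2"
  defines "T \<equiv> \<sigma> * \<alpha> * sqrt (real N\<^sub>1)"
  defines "N\<^sub>t \<equiv> nat \<lceil>(kappa \<alpha> + 1)^2 * T^2 / h + 1\<rceil>"
  defines "I \<equiv> (\<lambda>x. integral {0..real N\<^sub>t * h} (\<lambda>u. fint \<alpha> T u x))"
  defines "S \<equiv> (\<lambda>x. h * (\<Sum>j=1..N\<^sub>t. fint \<alpha> T (real j * h) x))"
  shows "(\<forall>x \<in> {0..1} \<inter> {0..xstar \<alpha> T}.
            0 \<le> I x - S x \<and> I x - S x \<le> I x \<and>
            I x \<le> ratio_star \<alpha> powr \<alpha> * exp (sqrt (ustar \<alpha>) - T))
      \<and> mono_on {0<..<1} ustar
      \<and> (\<forall>a \<in> {0<..<1}. 1 < ustar a \<and> ustar a < 4)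
      \<and> (\<exists>C. \<forall>a \<in> {0<..<1}. \<bar>ratio_star a powr a * exp (sqrt (ustar a))\<bar> \<le> C)"
proof (intro conjI)
  have a: "0 < \<alpha>" "\<alpha> < 1" using assms by auto
  have h: "0 < h" unfolding h_def using assms by simp
  have b: "0 \<le> real N\<^sub>t * h" using h by simp
  have rpos: "0 < ratio_star \<alpha>" using ratio_bound[OF a] by simp
  show "\<forall>x \<in> {0..1} \<inter> {0..xstar \<alpha> T}.
            0 \<le> I x - S x \<and> I x - S x \<le> I x \<and>
            I x \<le> ratio_star \<alpha> powr \<alpha> * exp (sqrt (ustar \<alpha>) - T)"
  proof
    fix x assume xin: "x \<in> {0..1} \<inter> {0..xstar \<alpha> T}"
    hence x: "0 \<le> x" "x \<le> xstar \<alpha> T" by auto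
    have Bnd: "0 \<le> ratio_star \<alpha> powr \<alpha> * exp (sqrt (ustar \<alpha>) - T)" by simp
    have Spos: "0 \<le> S x" unfolding S_def using h
      by (intro mult_nonneg_nonneg sum_nonneg fint_nonneg[OF a x(1)]) auto
    show "0 \<le> I x - S x \<and> I x - S x \<le> I x \<and>
            I x \<le> ratio_star \<alpha> powr \<alpha> * exp (sqrt (ustar \<alpha>) - T)"
    proof (cases "x = 0")
      case True
      have z: "fint \<alpha> T u x = 0" for u unfolding fint_def True by simp
      show ?thesis unfolding I_def S_def z using Bnd by simp
    next
      case False
      hence xp: "0 < x" using x by simp
      obtain J where J: "((\<lambda>u. fint \<alpha> T u x) has_integral J) {0..real N\<^sub>t * h}" "J \<le> x powr \<alpha>"
        using fint_integral[OF a xp b] by blast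
      have IJ: "I x = J" unfolding I_def using J(1) by (rule integral_unique)
      have fi: "(\<lambda>u. fint \<alpha> T u x) integrable_on {0..real N\<^sub>t * h}" using J(1) by blast
      have "S x \<le> I x" unfolding S_def I_def
        by (rule sum_le_integral[OF h fi]) (rule fint_mono[OF a _ _ x])
      moreover have "I x \<le> ratio_star \<alpha> powr \<alpha> * exp (sqrt (ustar \<alpha>) - T)"
      proof -
        have "I x \<le> x powr \<alpha>" using IJ J(2) by simp
        also have "\<dots> \<le> xstar \<alpha> T powr \<alpha>" using x a by (intro powr_mono2) auto
        also have "xstar \<alpha> T powr \<alpha> = ratio_star \<alpha> powr \<alpha> * exp ((sqrt (ustar \<alpha>) - T) / \<alpha>) powr \<alpha>"
          unfolding xstar_def using rpos by (simp add: powr_mult)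
        also have "exp ((sqrt (ustar \<alpha>) - T) / \<alpha>) powr \<alpha> = exp (sqrt (ustar \<alpha>) - T)"
          using a by (simp add: exp_powr_real)
        finally show ?thesis .
      qed
      ultimately show ?thesis using Spos by simp
    qed
  qed
  show "mono_on {0<..<1} ustar"
    by (rule mono_onI) (use ustar_mono in auto)
  show "\<forall>a \<in> {0<..<1}. 1 < ustar a \<and> ustar a < 4"
  proof
    fix a :: real assume "a \<in> {0<..<1}"
    hence a: "0 < a" "a < 1" by auto
    have s: "1 < sqrt (ustar a)" "sqrt (ustar a) < 2" using sstar_props[OF a] by auto
    have "1 < (sqrt (ustar a))^2" using s(1) by (simp add: one_less_power)
    moreover have "(sqrt (ustar a))^2 < 2^2" using s by (intro power_strict_mono) auto
    ultimately show "1 < ustar a \<and> ustar a < 4" using sstar_props(4)[OF a] by simp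
  qed
  show "\<exists>C. \<forall>a \<in> {0<..<1}. \<bar>ratio_star a powr a * exp (sqrt (ustar a))\<bar> \<le> C"
  proof (intro exI ballI)
    fix a :: real assume "a \<in> {0<..<1}"
    hence a: "0 < a" "a < 1" by auto
    have "0 \<le> ratio_star a powr a * exp (sqrt (ustar a))" by simp
    thus "\<bar>ratio_star a powr a * exp (sqrt (ustar a))\<bar> \<le> 6 * exp 2 * exp 2"
      using ratio_bound(2)[OF a] by simp
  qed
qed

end
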